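(* Let $G_1$ and $G_2$ be two vertex-disjoint simple connected graphs with $|V(G_1)|=n_1$, $|V(G_2)|=n_2$, $|E(G_1)|=m_1$, $|E(G_2)|=m_2$. Then the vertex R-join $G_1\dot{\vee}_R G_2$ satisfies \[ F(G_1\dot{\vee}_R G_2)=8F(G_1)+F(G_2)+12n_2M_1(G_1)+3n_1M_1(G_2)+12m_1n_2^{2}+6m_2n_1^{2}+n_1n_2(n_1^2+n_2^2)+8m_1 . \]
   Context: For a simple graph $G$ and $v\in V(G)$, $d_G(v)$ is the degree of $v$. The first Zagreb index is $M_1(G)=\sum_{v\in V(G)}d_G(v)^2$ and the F-index is $F(G)=\sum_{v\in V(G)}d_G(v)^3$. The graph $R(G)$ is obtained from $G$ by inserting a new vertex into each edge of $G$ and joining each new vertex to the two end vertices of the corresponding edge (so the original edges of $G$ are kept); let $I(G)$ denote the set of these new vertices, so $V(R(G))=V(G)\cup I(G)$. The vertex R-join $G_1\dot{\vee}_R G_2$ is the graph obtained from $R(G_1)$ and $G_2$ (taken vertex-disjoint) by joining each vertex of $V(G_1)$ to every vertex of $G_2$ by an edge. *)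

theory Defs
  imports Main
begin

definition simple_graph :: "'a set \<Rightarrow> 'a set set \<Rightarrow> bool" where
  "simple_graph V E \<longleftrightarrow> finite V \<and>
     (\<forall>e\<in>E. \<exists>u v. u \<in> V \<and> v \<in> V \<and> u \<noteq> v \<and> e = {u, v})"

definition graph_connected :: "'a set \<Rightarrow> 'a set set \<Rightarrow> bool" where
  "graph_connected V E \<longleftrightarrow> V \<noteq> {} \<and>
     (\<forall>u\<in>V. \<forall>v\<in>V. (u, v) \<in> {(x, y). {x, y} \<in> E}\<^sup>*)"

definition degree :: "'a set set \<Rightarrow> 'a \<Rightarrow> nat" where
  "degree E v = card {e \<in> E. v \<in> e}"

definition zagreb1 :: "'a set \<Rightarrow> 'a set set \<Rightarrow> nat" where
  "zagreb1 V E = (\<Sum>v\<in>V. degree E v ^ 2)"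

definition findex :: "'a set \<Rightarrow> 'a set set \<Rightarrow> nat" where
  "findex V E = (\<Sum>v\<in>V. degree E v ^ 3)"

definition R_vertices :: "'a set \<Rightarrow> 'a set set \<Rightarrow> ('a + 'a set) set" where
  "R_vertices V E = Inl ` V \<union> Inr ` E"

definition R_edges :: "'a set set \<Rightarrow> ('a + 'a set) set set" where
  "R_edges E = (\<lambda>e. Inl ` e) ` E \<union> {{Inl u, Inr e} | u e. e \<in> E \<and> u \<in> e}"

definition Rjoin_vertices ::
  "'a set \<Rightarrow> 'a set set \<Rightarrow> 'b set \<Rightarrow> (('a + 'a set) + 'b) set" where
  "Rjoin_vertices V1 E1 V2 = Inl ` R_vertices V1 E1 \<union> Inr ` V2"

definition Rjoin_edges ::
  "'a set \<Rightarrow> 'a set set \<Rightarrow> 'b set \<Rightarrow> 'b set set \<Rightarrow> (('a + 'a set) + 'b) set set" where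
  "Rjoin_edges V1 E1 V2 E2 =
     (\<lambda>e. Inl ` e) ` R_edges E1 \<union> (\<lambda>e. Inr ` e) ` E2 \<union>
     {{Inl (Inl u), Inr w} | u w. u \<in> V1 \<and> w \<in> V2}"

end

theory Submission
  imports Defs
begin

lemma sg_finE: assumes "simple_graph V E" shows "finite E"
proof -
  have "E \<subseteq> Pow V" using assms unfolding simple_graph_def by fastforce
  moreover have "finite V" using assms unfolding simple_graph_def by simp
  ultimately show ?thesis using finite_subset[of E "Pow V"] by simp
qed

lemma sg_card2: assumes "simple_graph V E" "e \<in> E" shows "card e = 2" "e \<subseteq> V"
  using assms unfolding simple_graph_def by auto

lemma handshake: assumes "simple_graph V E"
  shows "(\<Sum>v\<in>V. degree E v) = 2 * card E"
proof -
  have fV: "finite V" using assms unfolding simple_graph_def by simp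
  have fE: "finite E" using sg_finE[OF assms] .
  have "(\<Sum>v\<in>V. degree E v) = (\<Sum>v\<in>V. \<Sum>e\<in>E. if v \<in> e then 1 else (0::nat))"
    unfolding degree_def using fE by (simp add: sum.If_cases Int_def)
  also have "\<dots> = (\<Sum>e\<in>E. \<Sum>v\<in>V. if v \<in> e then 1 else (0::nat))"
    by (rule sum.swap)
  also have "\<dots> = (\<Sum>e\<in>E. card (V \<inter> e))"
    using fV by (simp add: sum.If_cases)
  also have "\<dots> = (\<Sum>e\<in>E. 2)"
  proof (rule sum.cong)
    fix e assume "e \<in> E"
    then have "V \<inter> e = e" "card e = 2" using sg_card2[OF assms] by auto
    then show "card (V \<inter> e) = 2" by simp
  qed simp
  finally show ?thesis by simp
qed

lemma deg_old:
  assumes sg1: "simple_graph V1 E1" and sg2: "simple_graph V2 E2" and v: "v \<in> V1"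
  shows "degree (Rjoin_edges V1 E1 V2 E2) (Inl (Inl v)) = 2 * degree E1 v + card V2"
proof -
  let ?A = "(\<lambda>e. Inl ` Inl ` e) ` {e\<in>E1. v\<in>e} :: (('a + 'a set) + 'b) set set"
  let ?B = "(\<lambda>e. {Inl (Inl v), Inl (Inr e)}) ` {e\<in>E1. v\<in>e} :: (('a + 'a set) + 'b) set set"
  let ?C = "(\<lambda>w. {Inl (Inl v), Inr w}) ` V2 :: (('a + 'a set) + 'b) set set"
  have fE1: "finite E1" using sg_finE[OF sg1] .
  have fV2: "finite V2" using sg2 unfolding simple_graph_def by simp
  have eq: "{e \<in> Rjoin_edges V1 E1 V2 E2. Inl (Inl v) \<in> e} = ?A \<union> ?B \<union> ?C"
  proof
    show "{e \<in> Rjoin_edges V1 E1 V2 E2. Inl (Inl v) \<in> e} \<subseteq> ?A \<union> ?B \<union> ?C"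
      unfolding Rjoin_edges_def R_edges_def using v by (auto simp: image_iff)
    show "?A \<union> ?B \<union> ?C \<subseteq> {e \<in> Rjoin_edges V1 E1 V2 E2. Inl (Inl v) \<in> e}"
    proof
      fix x assume "x \<in> ?A \<union> ?B \<union> ?C"
      then consider (a) e where "e \<in> E1" "v \<in> e" "x = Inl ` Inl ` e"
        | (b) e where "e \<in> E1" "v \<in> e" "x = Inl ` {Inl v, Inr e}"
        | (c) w where "w \<in> V2" "x = {Inl (Inl v), Inr w}" by auto
      then show "x \<in> {e \<in> Rjoin_edges V1 E1 V2 E2. Inl (Inl v) \<in> e}"
      proof cases
        case a then show ?thesis unfolding Rjoin_edges_def R_edges_def by blast
      next
        case b
        have "{Inl v, Inr e} \<in> R_edges E1" unfolding R_edges_def using b by blast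
        then show ?thesis unfolding Rjoin_edges_def using b by blast
      next
        case c then show ?thesis unfolding Rjoin_edges_def using v by blast
      qed
    qed
  qed
  have iA: "inj_on (\<lambda>e. Inl ` Inl ` e :: (('a + 'a set) + 'b) set) {e\<in>E1. v\<in>e}"
    by (rule inj_onI) (simp add: inj_image_eq_iff inj_def)
  have iB: "inj_on (\<lambda>e. {Inl (Inl v), Inl (Inr e)} :: (('a + 'a set) + 'b) set) {e\<in>E1. v\<in>e}"
    by (rule inj_onI) (auto simp: doubleton_eq_iff)
  have iC: "inj_on (\<lambda>w. {Inl (Inl v), Inr w} :: (('a + 'a set) + 'b) set) V2"
    by (rule inj_onI) (auto simp: doubleton_eq_iff)
  have d1: "?A \<inter> ?B = {}" by auto
  have d2: "(?A \<union> ?B) \<inter> ?C = {}" by auto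
  have fin: "finite ?A" "finite ?B" "finite ?C" using fE1 fV2 by auto
  have "card (?A \<union> ?B \<union> ?C) = card ?A + card ?B + card ?C"
    using fin d1 d2 by (simp add: card_Un_disjoint)
  also have "\<dots> = degree E1 v + degree E1 v + card V2"
    unfolding degree_def using iA iB iC by (simp add: card_image)
  finally show ?thesis unfolding degree_def eq by simp
qed

lemma deg_new:
  assumes sg1: "simple_graph V1 E1" and e: "e \<in> E1"
  shows "degree (Rjoin_edges V1 E1 V2 E2) (Inl (Inr e)) = 2"
proof -
  have eq: "{x \<in> Rjoin_edges V1 E1 V2 E2. Inl (Inr e) \<in> x} =
     (\<lambda>u. {Inl (Inl u), Inl (Inr e)}) ` e" (is "?L = ?R")
  proof
    show "{x \<in> Rjoin_edges V1 E1 V2 E2. Inl (Inr e) \<in> x} \<subseteq> (\<lambda>u. {Inl (Inl u), Inl (Inr e)}) ` e"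
      unfolding Rjoin_edges_def R_edges_def using e by (auto simp: image_iff)
    show "?R \<subseteq> ?L"
    proof
      fix x assume "x \<in> ?R"
      then obtain u where u: "u \<in> e" "x = Inl ` {Inl u, Inr e}" by auto
      have "{Inl u, Inr e} \<in> R_edges E1" unfolding R_edges_def using u e by blast
      then show "x \<in> ?L"
        unfolding Rjoin_edges_def using u by blast
    qed
  qed
  have i: "inj_on (\<lambda>u. {Inl (Inl u), Inl (Inr e)} :: (('a + 'a set) + 'b) set) e"
    by (rule inj_onI) (auto simp: doubleton_eq_iff)
  show ?thesis unfolding degree_def eq using card_image[OF i] sg_card2[OF sg1 e] by simp
qed

lemma deg_two:
  assumes sg1: "simple_graph V1 E1" and sg2: "simple_graph V2 E2" and w: "w \<in> V2"
  shows "degree (Rjoin_edges V1 E1 V2 E2) (Inr w) = degree E2 w + card V1"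
proof -
  let ?A = "(\<lambda>e. Inr ` e) ` {e\<in>E2. w\<in>e} :: (('a + 'a set) + 'b) set set"
  let ?C = "(\<lambda>u. {Inl (Inl u), Inr w}) ` V1 :: (('a + 'a set) + 'b) set set"
  have fE2: "finite E2" using sg_finE[OF sg2] .
  have fV1: "finite V1" using sg1 unfolding simple_graph_def by simp
  have eq: "{e \<in> Rjoin_edges V1 E1 V2 E2. Inr w \<in> e} = ?A \<union> ?C"
    unfolding Rjoin_edges_def R_edges_def using w by (auto simp: image_iff)
  have iA: "inj_on (\<lambda>e. Inr ` e :: (('a + 'a set) + 'b) set) {e\<in>E2. w\<in>e}"
    by (rule inj_onI) (simp add: inj_image_eq_iff inj_def)
  have iC: "inj_on (\<lambda>u. {Inl (Inl u), Inr w} :: (('a + 'a set) + 'b) set) V1"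
    by (rule inj_onI) (auto simp: doubleton_eq_iff)
  have d2: "?A \<inter> ?C = {}" by auto
  have fin: "finite ?A" "finite ?C" using fE2 fV1 by auto
  have "card (?A \<union> ?C) = card ?A + card ?C"
    using fin d2 by (simp add: card_Un_disjoint)
  also have "\<dots> = degree E2 w + card V1"
    unfolding degree_def using iA iC by (simp add: card_image)
  finally show ?thesis unfolding degree_def eq by simp
qed

lemma cube_exp: "((a::nat) + b)^3 = a^3 + 3*b*a^2 + 3*b^2*a + b^3"
  by (simp add: power3_eq_cube power2_eq_square algebra_simps)

theorem theorem3:
  fixes V1 :: "'a set" and E1 :: "'a set set" and V2 :: "'b set" and E2 :: "'b set set"
  assumes "simple_graph V1 E1" and "graph_connected V1 E1"
    and "simple_graph V2 E2" and "graph_connected V2 E2"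
  shows "findex (Rjoin_vertices V1 E1 V2) (Rjoin_edges V1 E1 V2 E2) =
     8 * findex V1 E1 + findex V2 E2
     + 12 * card V2 * zagreb1 V1 E1 + 3 * card V1 * zagreb1 V2 E2
     + 12 * card E1 * card V2 ^ 2 + 6 * card E2 * card V1 ^ 2
     + card V1 * card V2 * (card V1 ^ 2 + card V2 ^ 2) + 8 * card E1"
proof -
  note sg1 = assms(1) and sg2 = assms(3)
  let ?E = "Rjoin_edges V1 E1 V2 E2"
  let ?n1 = "card V1" and ?n2 = "card V2"
  have fV1: "finite V1" using sg1 unfolding simple_graph_def by simp
  have fV2: "finite V2" using sg2 unfolding simple_graph_def by simp
  have fE1: "finite E1" using sg_finE[OF sg1] .
  have split: "Rjoin_vertices V1 E1 V2 = ((Inl \<circ> Inl) ` V1 \<union> (Inl \<circ> Inr) ` E1) \<union> Inr ` V2"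
    by (auto simp: Rjoin_vertices_def R_vertices_def)
  have S1: "(\<Sum>x\<in>(Inl \<circ> Inl) ` V1. degree ?E x ^ 3) =
      8 * findex V1 E1 + 12 * ?n2 * zagreb1 V1 E1 + 12 * card E1 * ?n2^2 + ?n1 * ?n2^3"
  proof -
    have "(\<Sum>x\<in>(Inl \<circ> Inl) ` V1. degree ?E x ^ 3) = (\<Sum>v\<in>V1. (2 * degree E1 v + ?n2) ^ 3)"
      by (subst sum.reindex) (auto simp: inj_on_def deg_old[OF sg1 sg2])
    also have "\<dots> = (\<Sum>v\<in>V1. 8 * degree E1 v ^ 3 + 12 * ?n2 * degree E1 v ^ 2
         + 6 * ?n2^2 * degree E1 v + ?n2^3)"
      by (rule sum.cong) (simp_all add: cube_exp power_mult_distrib)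
    also have "\<dots> = 8 * findex V1 E1 + 12 * ?n2 * zagreb1 V1 E1
        + 6 * ?n2^2 * (\<Sum>v\<in>V1. degree E1 v) + ?n1 * ?n2^3"
      by (simp add: sum.distrib sum_distrib_left findex_def zagreb1_def)
    also have "\<dots> = 8 * findex V1 E1 + 12 * ?n2 * zagreb1 V1 E1 + 12 * card E1 * ?n2^2 + ?n1 * ?n2^3"
      by (simp add: handshake[OF sg1])
    finally show ?thesis .
  qed
  have S2: "(\<Sum>x\<in>(Inl \<circ> Inr) ` E1. degree ?E x ^ 3) = 8 * card E1"
    by (subst sum.reindex) (auto simp: inj_on_def deg_new[OF sg1])
  have S3: "(\<Sum>x\<in>Inr ` V2. degree ?E x ^ 3) =
      findex V2 E2 + 3 * ?n1 * zagreb1 V2 E2 + 6 * card E2 * ?n1^2 + ?n2 * ?n1^3"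
  proof -
    have "(\<Sum>x\<in>Inr ` V2. degree ?E x ^ 3) = (\<Sum>w\<in>V2. (degree E2 w + ?n1) ^ 3)"
      by (subst sum.reindex) (auto simp: inj_on_def deg_two[OF sg1 sg2])
    also have "\<dots> = (\<Sum>w\<in>V2. degree E2 w ^ 3 + 3 * ?n1 * degree E2 w ^ 2
         + 3 * ?n1^2 * degree E2 w + ?n1^3)"
      by (rule sum.cong) (simp_all add: cube_exp)
    also have "\<dots> = findex V2 E2 + 3 * ?n1 * zagreb1 V2 E2
        + 3 * ?n1^2 * (\<Sum>w\<in>V2. degree E2 w) + ?n2 * ?n1^3"
      by (simp add: sum.distrib sum_distrib_left findex_def zagreb1_def)
    also have "\<dots> = findex V2 E2 + 3 * ?n1 * zagreb1 V2 E2 + 6 * card E2 * ?n1^2 + ?n2 * ?n1^3"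
      by (simp add: handshake[OF sg2])
    finally show ?thesis .
  qed
  have "findex (Rjoin_vertices V1 E1 V2) ?E =
      (\<Sum>x\<in>(Inl \<circ> Inl) ` V1. degree ?E x ^ 3) + (\<Sum>x\<in>(Inl \<circ> Inr) ` E1. degree ?E x ^ 3)
      + (\<Sum>x\<in>Inr ` V2. degree ?E x ^ 3)"
  proof -
    have d1: "(Inl \<circ> Inl) ` V1 \<inter> (Inl \<circ> Inr) ` E1 = ({} :: (('a + 'a set) + 'b) set)" by auto
    have d2: "((Inl \<circ> Inl) ` V1 \<union> (Inl \<circ> Inr) ` E1) \<inter> Inr ` V2 = ({} :: (('a + 'a set) + 'b) set)" by auto
    show ?thesis unfolding findex_def split
      using sum.union_disjoint[OF _ _ d2, of "\<lambda>x. degree ?E x ^ 3"]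
        sum.union_disjoint[OF _ _ d1, of "\<lambda>x. degree ?E x ^ 3"] fV1 fV2 fE1
      by simp
  qed
  moreover have key: "?n1 * ?n2 * (?n1^2 + ?n2^2) = ?n1 * ?n2^3 + ?n2 * ?n1^3"
    by (simp add: power2_eq_square power3_eq_cube algebra_simps)
  ultimately show ?thesis unfolding S1 S2 S3 key by linarith
qed

end
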